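(* Consider the heteroscedastic linear model $y(i,k)=\tau_i+\mu+\mathbf g^T(k)\beta+\varepsilon(i,k)$ with treatments $i\in\{1,\ldots,v_1\}$, covariate indices $k\in\{1,\ldots,d\}$, known regressors $\mathbf g(k)\in\mathbb R^{v_2}$, uncorrelated errors with mean zero and $\mathrm{Var}(\varepsilon(i,k))=\sigma^2/\lambda_i$ where $\lambda_1,\ldots,\lambda_{v_1}>0$ are known. Let $w=(w_1,\ldots,w_{v_1})$ be a marginal treatment design with $w_i>0$ for all $i$, and let $\alpha=(\alpha_1,\ldots,\alpha_d)$ be a marginal covariate design feasible for $\mathbf K^T\beta$, i.e. $\mathcal C(\mathbf K)\subseteq\mathcal C(\mathbf S(\alpha))$. Then the product design $\xi=w\otimes\alpha$ (i.e. $\xi(i,k)=w_i\alpha_k$) is feasible for $\mathbf A^T\theta$, and its information matrix is $$\mathbf N_{\mathbf A}(w\otimes\alpha)=\begin{bmatrix}\mathbf N_{\mathbf Q_1}(w) & \mathbf 0\\ \mathbf 0 & \big(\sum_{i=1}^{v_1}\lambda_i w_i\big)\mathbf N_{\mathbf K}(\alpha)\end{bmatrix}.$$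
   Context: Write $\theta=(\tau^T,\mu,\beta^T)^T$ with $\tau=(\tau_1,\ldots,\tau_{v_1})^T$, $\beta\in\mathbb R^{v_2}$, $\mathbf h(k)=(1,\mathbf g^T(k))^T$ and $\mathbf f(i,k)=(\mathbf e_i^T,1,\mathbf g^T(k))^T$. A design $\xi$ is a nonnegative function on $\{1,\ldots,v_1\}\times\{1,\ldots,d\}$ with $\sum_{i,k}\xi(i,k)=1$; its moment matrix is $\mathbf M(\xi)=\sum_{i,k}\xi(i,k)\lambda_i\mathbf f(i,k)\mathbf f^T(i,k)$. Let $\mathbf Q_1\in\mathbb R^{v_1\times s_1}$ have full column rank, satisfy $\mathbf Q_1^T\mathbf 1_{v_1}=\mathbf 0$, and have no zero row; let $\mathbf K\in\mathbb R^{v_2\times s_2}$ have full column rank; let $\mathbf Q_2=(\mathbf 0_{s_2},\mathbf K^T)^T\in\mathbb R^{(v_2+1)\times s_2}$ and $\mathbf A=\mathrm{diag}(\mathbf Q_1,\mathbf Q_2)$. A design $\xi$ is feasible for $\mathbf A^T\theta$ if $\mathcal C(\mathbf A)\subseteq\mathcal C(\mathbf M(\xi))$, and then $\mathbf N_{\mathbf A}(\xi)=(\mathbf A^T\mathbf M^-(\xi)\mathbf A)^{-1}$ (any generalized inverse). A marginal treatment design $w$ is a vector of nonnegative weights $w_1,\ldots,w_{v_1}$ summing to one; $\mathbf M_1(w)=\mathrm{diag}(\lambda_1w_1,\ldots,\lambda_{v_1}w_{v_1})$ and, for $w>0$, $\mathbf N_{\mathbf Q_1}(w)=(\mathbf Q_1^T\mathbf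 M_1^{-1}(w)\mathbf Q_1)^{-1}$. A marginal covariate design $\alpha$ is a vector of nonnegative weights $\alpha_1,\ldots,\alpha_d$ summing to one; $\mathbf S(\alpha)=\sum_k\alpha_k\mathbf g(k)\mathbf g^T(k)-(\sum_k\alpha_k\mathbf g(k))(\sum_k\alpha_k\mathbf g(k))^T$, and for feasible $\alpha$, $\mathbf N_{\mathbf K}(\alpha)=(\mathbf K^T\mathbf S^-(\alpha)\mathbf K)^{-1}$. *)

theory Defs
  imports "HOL-Analysis.Analysis"
begin

text \<open>Index types: treatments 't (v1 = CARD('t)), covariate indices 'k (d = CARD('k)),
  regressor coordinates 'b (v2 = CARD('b)), columns of Q1 's1, columns of K 's2.
  The parameter vector theta = (tau, mu, beta) is indexed by 't + (unit + 'b).\<close>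

type_synonym ('t,'b) param = "'t + (unit + 'b)"

definition outer :: "real^'n \<Rightarrow> real^'m \<Rightarrow> real^'m^'n" where
  "outer x y = (\<chi> i j. x $ i * y $ j)"

definition col_space :: "real^'n^'m \<Rightarrow> (real^'m) set" where
  "col_space A = range (\<lambda>x. A *v x)"

definition is_ginv :: "real^'n^'n \<Rightarrow> real^'n^'n \<Rightarrow> bool" where
  "is_ginv M G \<longleftrightarrow> M ** G ** M = M"

definition ginv :: "real^'n^'n \<Rightarrow> real^'n^'n" where
  "ginv M = (SOME G. is_ginv M G)"

definition fvec :: "('k \<Rightarrow> real^'b::finite) \<Rightarrow> 't::finite \<Rightarrow> 'k \<Rightarrow> real^(('t,'b) param)" where
  "fvec g i k = (\<chi> r. case r of Inl j \<Rightarrow> (if j = i then 1 else 0)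
                               | Inr (Inl _) \<Rightarrow> 1
                               | Inr (Inr b) \<Rightarrow> g k $ b)"

definition moment :: "('t::finite \<Rightarrow> real) \<Rightarrow> ('k::finite \<Rightarrow> real^'b) \<Rightarrow> ('t \<Rightarrow> 'k \<Rightarrow> real)
    \<Rightarrow> real^(('t,'b) param)^(('t,'b) param)" where
  "moment lam g \<xi> = (\<Sum>i\<in>UNIV. \<Sum>k\<in>UNIV. (\<xi> i k * lam i) *\<^sub>R outer (fvec g i k) (fvec g i k))"

definition is_design :: "('t::finite \<Rightarrow> 'k::finite \<Rightarrow> real) \<Rightarrow> bool" where
  "is_design \<xi> \<longleftrightarrow> (\<forall>i k. 0 \<le> \<xi> i k) \<and> (\<Sum>i\<in>UNIV. \<Sum>k\<in>UNIV. \<xi> i k) = 1"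

definition feasible :: "real^'s^'n \<Rightarrow> real^'n^'n \<Rightarrow> bool" where
  "feasible A M \<longleftrightarrow> col_space A \<subseteq> col_space M"

definition info :: "real^'s^'n \<Rightarrow> real^'n^'n \<Rightarrow> real^'s^'s" where
  "info A M = matrix_inv (transpose A ** ginv M ** A)"

definition Q2mat :: "real^'s2::finite^'b::finite \<Rightarrow> real^'s2^(unit + 'b)" where
  "Q2mat K = (\<chi> r c. case r of Inl _ \<Rightarrow> 0 | Inr b \<Rightarrow> K $ b $ c)"

definition blockdiag :: "real^'c1::finite^'r1::finite \<Rightarrow> real^'c2::finite^'r2::finite \<Rightarrow> real^('c1 + 'c2)^('r1 + 'r2)" where
  "blockdiag P R = (\<chi> r c. case (r, c) of (Inl a, Inl b) \<Rightarrow> P $ a $ b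
                                    | (Inr a, Inr b) \<Rightarrow> R $ a $ b
                                    | _ \<Rightarrow> 0)"

definition Amat :: "real^'s1::finite^'t::finite \<Rightarrow> real^'s2::finite^'b::finite \<Rightarrow> real^('s1 + 's2)^(('t,'b) param)" where
  "Amat Q1 K = blockdiag Q1 (Q2mat K)"

definition prod_design :: "('t \<Rightarrow> real) \<Rightarrow> ('k \<Rightarrow> real) \<Rightarrow> 't \<Rightarrow> 'k \<Rightarrow> real" where
  "prod_design w \<alpha> i k = w i * \<alpha> k"

definition M1 :: "('t::finite \<Rightarrow> real) \<Rightarrow> ('t \<Rightarrow> real) \<Rightarrow> real^'t^'t" where
  "M1 lam w = (\<chi> i j. if i = j then lam i * w i else 0)"

definition NQ1 :: "('t::finite \<Rightarrow> real) \<Rightarrow> real^'s1::finite^'t \<Rightarrow> ('t \<Rightarrow> real) \<Rightarrow> real^'s1^'s1" where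
  "NQ1 lam Q1 w = matrix_inv (transpose Q1 ** matrix_inv (M1 lam w) ** Q1)"

definition Smat :: "('k::finite \<Rightarrow> real^'b::finite) \<Rightarrow> ('k \<Rightarrow> real) \<Rightarrow> real^'b^'b" where
  "Smat g \<alpha> = (\<Sum>k\<in>UNIV. \<alpha> k *\<^sub>R outer (g k) (g k))
              - outer (\<Sum>k\<in>UNIV. \<alpha> k *\<^sub>R g k) (\<Sum>k\<in>UNIV. \<alpha> k *\<^sub>R g k)"

definition NK :: "real^'s2::finite^'b::finite \<Rightarrow> ('k::finite \<Rightarrow> real^'b) \<Rightarrow> ('k \<Rightarrow> real) \<Rightarrow> real^'s2^'s2" where
  "NK K g \<alpha> = info K (Smat g \<alpha>)"

end

theory Submission
  imports Defs
begin

lemma sum_UNIV_sum: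
  fixes f :: "'a::finite + 'b::finite \<Rightarrow> 'c::comm_monoid_add"
  shows "(\<Sum>x\<in>UNIV. f x) = (\<Sum>a\<in>UNIV. f (Inl a)) + (\<Sum>b\<in>UNIV. f (Inr b))"
  by (subst UNIV_Plus_UNIV[symmetric], subst sum.Plus) (auto simp: o_def)

lemma sum_UNIV_unit: "(\<Sum>x\<in>(UNIV::unit set). f x) = f ()"
  by (simp add: UNIV_unit)

lemma inv_unique:
  fixes A B :: "'a::field^'n^'n"
  assumes "A ** B = mat 1"
  shows "invertible A \<and> matrix_inv A = B"
proof -
  have BA: "B ** A = mat 1" using assms matrix_left_right_inverse by blast
  hence inv: "invertible A" using assms invertible_def by blast
  let ?C = "matrix_inv A"
  have "A ** ?C = mat 1 \<and> ?C ** A = mat 1"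
    unfolding matrix_inv_def by (rule someI_ex) (use inv invertible_def in blast)
  hence "?C = ?C ** (A ** B)" using assms by (simp add: matrix_mul_rid)
  also have "\<dots> = B" using \<open>A ** ?C = mat 1 \<and> ?C ** A = mat 1\<close>
    by (simp add: matrix_mul_assoc matrix_mul_lid)
  finally show ?thesis using inv by simp
qed

lemma inv_right:
  fixes A :: "'a::field^'n^'n"
  assumes "invertible A"
  shows "A ** matrix_inv A = mat 1"
proof -
  have "A ** matrix_inv A = mat 1 \<and> matrix_inv A ** A = mat 1"
    unfolding matrix_inv_def by (rule someI_ex) (use assms invertible_def in blast)
  thus ?thesis by simp
qed

lemma inj_0:
  fixes A :: "real^'n^'m"
  assumes "\<And>v. A *v v = 0 \<Longrightarrow> v = 0"
  shows "inj ((*v) A)"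
proof (rule injI)
  fix x y assume "A *v x = A *v y"
  hence "A *v (x - y) = 0" by (simp add: matrix_vector_mult_diff_distrib)
  hence "x - y = 0" using assms by blast
  thus "x = y" by simp
qed

lemma dot_transpose: "(v::real^'n) \<bullet> (transpose A *v x) = (A *v v) \<bullet> x"
  by (metis dot_lmul_matrix inner_commute transpose_matrix_vector)

lemma inj_invertible:
  fixes A :: "real^'n^'n"
  assumes "inj ((*v) A)"
  shows "invertible A"
  using assms matrix_left_invertible_injective invertible_left_inverse by blast

lemma ginv_exists:
  fixes M :: "real^'n^'n"
  shows "is_ginv M (ginv M)"
proof -
  obtain g where g: "linear g" "\<forall>v\<in>range ((*v) M). M *v (g v) = v"
    using linear_exists_right_inverse_on[of "(*v) M" UNIV] by auto
  have "M ** matrix g ** M = M"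
    unfolding matrix_eq
    by (simp add: g matrix_vector_mul_assoc[symmetric] matrix_works)
  hence "\<exists>G. is_ginv M G" unfolding is_ginv_def by blast
  thus ?thesis unfolding ginv_def by (rule someI_ex)
qed

lemma ginv_form:
  fixes M G :: "real^'n^'n" and X :: "real^'s^'n"
  assumes "transpose M = M" "is_ginv M G" "A = M ** X"
  shows "transpose A ** G ** A = transpose X ** A"
proof -
  have "transpose A ** G ** A = transpose X ** (M ** G ** M) ** X"
    using assms(1,3) by (simp add: matrix_transpose_mul matrix_mul_assoc)
  also have "\<dots> = transpose X ** A" using assms(2,3) by (simp add: is_ginv_def matrix_mul_assoc)
  finally show ?thesis .
qed

lemma col_space_mul: "col_space (M ** X) \<subseteq> col_space M"
  unfolding col_space_def by (auto simp: matrix_vector_mul_assoc[symmetric])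

lemma blockdiag_mul:
  "blockdiag P R ** blockdiag P' R' = blockdiag (P ** P') (R ** R')"
  unfolding blockdiag_def matrix_matrix_mult_def
  by (auto simp: vec_eq_iff sum_UNIV_sum split: sum.splits)

lemma blockdiag_one: "blockdiag (mat 1) (mat 1) = mat 1"
  unfolding blockdiag_def mat_def by (auto simp: vec_eq_iff split: sum.splits)

lemma blockdiag_inv:
  fixes P :: "real^'a::finite^'a" and R :: "real^'b::finite^'b"
  assumes "invertible P" "invertible R"
  shows "invertible (blockdiag P R) \<and> matrix_inv (blockdiag P R) = blockdiag (matrix_inv P) (matrix_inv R)"
proof -
  have "P ** matrix_inv P = mat 1" "R ** matrix_inv R = mat 1"
    using assms by (simp_all add: inv_right)
  thus ?thesis by (intro inv_unique) (simp add: blockdiag_mul blockdiag_one)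
qed


lemma fvec_simps [simp]:
  "fvec g i k $ Inl j = (if j = i then 1 else 0)"
  "fvec g i k $ Inr (Inl u) = 1"
  "fvec g i k $ Inr (Inr b) = g k $ b"
  by (simp_all add: fvec_def)

lemma moment_entry:
  "moment lam g \<xi> $ r $ s = (\<Sum>i\<in>UNIV. \<Sum>k\<in>UNIV. (\<xi> i k * lam i) * (fvec g i k $ r * fvec g i k $ s))"
  unfolding moment_def outer_def by (simp add: sum_component)

lemma moment_mul:
  "(moment lam g \<xi> ** X) $ r $ c =
     (\<Sum>i\<in>UNIV. \<Sum>k\<in>UNIV. (\<xi> i k * lam i) * fvec g i k $ r * (\<Sum>s\<in>UNIV. fvec g i k $ s * X $ s $ c))"
proof -
  have "(moment lam g \<xi> ** X) $ r $ c = (\<Sum>s\<in>UNIV. \<Sum>i\<in>UNIV. \<Sum>k\<in>UNIV. (\<xi> i k * lam i) * (fvec g i k $ r * fvec g i k $ s) * X $ s $ c)"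
    by (simp add: matrix_matrix_mult_def moment_entry sum_distrib_right)
  also have "\<dots> = (\<Sum>i\<in>UNIV. \<Sum>k\<in>UNIV. \<Sum>s\<in>UNIV. (\<xi> i k * lam i) * (fvec g i k $ r * fvec g i k $ s) * X $ s $ c)"
    by (subst sum.swap, subst (2) sum.swap, rule refl)
  also have "\<dots> = (\<Sum>i\<in>UNIV. \<Sum>k\<in>UNIV. (\<xi> i k * lam i) * fvec g i k $ r * (\<Sum>s\<in>UNIV. fvec g i k $ s * X $ s $ c))"
    by (simp add: sum_distrib_left mult.assoc mult.left_commute)
  finally show ?thesis .
qed

definition Xmat :: "('t::finite \<Rightarrow> real) \<Rightarrow> ('t \<Rightarrow> real) \<Rightarrow> real^'s1::finite^'t \<Rightarrow> real^'b::finite \<Rightarrow> ('s2::finite \<Rightarrow> real^'b) \<Rightarrow> real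
    \<Rightarrow> real^('s1 + 's2)^(('t,'b) param)" where
  "Xmat lam w Q1 gb z C = (\<chi> r c. case (r, c) of
       (Inl i, Inl j) \<Rightarrow> Q1 $ i $ j / (lam i * w i)
     | (Inr (Inl u), Inr j) \<Rightarrow> - (gb \<bullet> z j) / C
     | (Inr (Inr b), Inr j) \<Rightarrow> z j $ b / C
     | _ \<Rightarrow> 0)"

lemma h_Inl:
  "(\<Sum>s\<in>UNIV. fvec g i k $ s * Xmat lam w Q1 gb z C $ s $ Inl j) = Q1 $ i $ j / (lam i * w i)"
proof -
  have e: "\<And>a y. (if a = i then 1 else 0) * (y::real) = (if a = i then y else 0)" by simp
  have e2: "\<And>a y d. (if a = i then y else 0) / (d::real) = (if a = i then y / d else 0)" by simp
  show ?thesis by (simp add: Xmat_def sum_UNIV_sum e e2)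
qed

lemma h_Inr:
  "(\<Sum>s\<in>UNIV. fvec g i k $ s * Xmat lam w Q1 gb z C $ s $ Inr j) = ((g k - gb) \<bullet> z j) / C"
  apply (simp add: Xmat_def sum_UNIV_sum sum_UNIV_unit inner_vec_def inner_diff_left)
  apply (simp add: sum_divide_distrib[symmetric] diff_divide_distrib sum_subtractf left_diff_distrib)
  done

lemma fact_sum:
  fixes w lam :: "'t::finite \<Rightarrow> real" and \<alpha> F :: "'k::finite \<Rightarrow> real"
  shows "(\<Sum>i\<in>UNIV. \<Sum>k\<in>UNIV. (w i * \<alpha> k * lam i) * F k) = (\<Sum>i\<in>UNIV. w i * lam i) * (\<Sum>k\<in>UNIV. \<alpha> k * F k)"
  by (simp add: sum_distrib_left sum_distrib_right mult_ac)

lemma moment_X: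
  fixes lam w :: "'t::finite \<Rightarrow> real" and g :: "'k::finite \<Rightarrow> real^'b::finite"
    and Q1 :: "real^'s1::finite^'t" and K :: "real^'s2::finite^'b" and \<alpha> :: "'k \<Rightarrow> real"
    and z :: "'s2 \<Rightarrow> real^'b"
  assumes h\<alpha>: "(\<Sum>k\<in>UNIV. \<alpha> k) = 1"
    and hQ: "\<And>j. (\<Sum>i\<in>UNIV. Q1 $ i $ j) = 0"
    and hlw: "\<And>i. lam i * w i \<noteq> 0"
    and hC: "C = (\<Sum>i\<in>UNIV. w i * lam i)" "C \<noteq> 0"
    and hgb: "gb = (\<Sum>k\<in>UNIV. \<alpha> k *\<^sub>R g k)"
    and hz: "\<And>j b. (\<Sum>k\<in>UNIV. \<alpha> k * (g k $ b * ((g k - gb) \<bullet> z j))) = K $ b $ j"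
  shows "moment lam g (prod_design w \<alpha>) ** Xmat lam w Q1 gb z C = Amat Q1 K"
proof -
  have z0: "(\<Sum>k\<in>UNIV. \<alpha> k * ((g k - gb) \<bullet> z j)) = 0" for j
  proof -
    have "(\<Sum>k\<in>UNIV. \<alpha> k *\<^sub>R (g k - gb)) = 0"
      by (simp add: scaleR_diff_right sum_subtractf hgb[symmetric] scaleR_sum_left[symmetric] h\<alpha>)
    hence "(\<Sum>k\<in>UNIV. \<alpha> k *\<^sub>R (g k - gb)) \<bullet> z j = 0" by simp
    thus ?thesis by (simp add: inner_sum_left)
  qed
  have A1: "Amat Q1 K $ Inl i $ Inl j = Q1 $ i $ j" 
    and A2: "Amat Q1 K $ Inl i $ Inr j' = 0"
    and A3: "Amat Q1 K $ Inr r $ Inl j = 0"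
    and A4: "Amat Q1 K $ Inr (Inl u) $ Inr j' = 0"
    and A5: "Amat Q1 K $ Inr (Inr b) $ Inr j' = K $ b $ j'"
    for i j j' r u b
    by (simp_all add: Amat_def blockdiag_def Q2mat_def)
  have pd: "prod_design w \<alpha> i k * lam i = w i * \<alpha> k * lam i" for i k
    by (simp add: prod_design_def)
  show ?thesis
  proof (rule iffD2[OF vec_eq_iff], rule allI, rule iffD2[OF vec_eq_iff], rule allI)
    fix r c
    show "(moment lam g (prod_design w \<alpha>) ** Xmat lam w Q1 gb z C) $ r $ c = Amat Q1 K $ r $ c"
    proof (cases c)
      case (Inl j)
      have "(moment lam g (prod_design w \<alpha>) ** Xmat lam w Q1 gb z C) $ r $ c
         = (\<Sum>i\<in>UNIV. \<Sum>k\<in>UNIV. \<alpha> k * (fvec g i k $ r * Q1 $ i $ j))"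
        using hlw by (simp add: moment_mul Inl h_Inl prod_design_def field_simps)
      also have "\<dots> = Amat Q1 K $ r $ c"
      proof (cases r)
        case (Inl i0)
        have e: "\<And>a y. (if i0 = a then 1 else 0) * (y::real) = (if a = i0 then y else 0)" by simp
        show ?thesis by (simp add: Inl \<open>c = Inl j\<close> A1 e sum_distrib_right[symmetric] h\<alpha> cong: if_cong)
      next
        case (Inr r')
        show ?thesis
        proof (cases r')
          case (Inl u)
          show ?thesis using hQ[of j]
            by (simp add: Inr Inl \<open>c = Inl j\<close> A3 sum_distrib_right[symmetric] h\<alpha>)
        next
          case (Inr b)
          have "(\<Sum>i\<in>UNIV. \<Sum>k\<in>UNIV. \<alpha> k * (g k $ b * Q1 $ i $ j)) = (\<Sum>i\<in>UNIV. Q1 $ i $ j) * (\<Sum>k\<in>UNIV. \<alpha> k * g k $ b)"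
            by (simp add: sum_product mult_ac)
          thus ?thesis using hQ[of j]
            by (simp add: \<open>r = Inr r'\<close> Inr \<open>c = Inl j\<close> A3)
        qed
      qed
      finally show ?thesis .
    next
      case (Inr j)
      have "(moment lam g (prod_design w \<alpha>) ** Xmat lam w Q1 gb z C) $ r $ c
         = (\<Sum>i\<in>UNIV. \<Sum>k\<in>UNIV. (w i * \<alpha> k * lam i) * (fvec g i k $ r * ((g k - gb) \<bullet> z j) / C))"
        by (simp add: moment_mul Inr h_Inr pd mult.assoc)
      also have "\<dots> = Amat Q1 K $ r $ c"
      proof (cases r)
        case (Inl i0)
        have e: "\<And>a y. (if i0 = a then 1 else 0) * (y::real) = (if a = i0 then y else 0)" by simp
        have "(\<Sum>i\<in>UNIV. \<Sum>k\<in>UNIV. (w i * \<alpha> k * lam i) * (fvec g i k $ r * ((g k - gb) \<bullet> z j) / C))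
           = (\<Sum>k\<in>UNIV. (w i0 * lam i0 / C) * (\<alpha> k * ((g k - gb) \<bullet> z j)))"
        proof -
          have "(\<Sum>i\<in>UNIV. \<Sum>k\<in>UNIV. (w i * \<alpha> k * lam i) * (fvec g i k $ r * ((g k - gb) \<bullet> z j) / C))
             = (\<Sum>i\<in>UNIV. if i = i0 then (\<Sum>k\<in>UNIV. (w i * \<alpha> k * lam i) * (((g k - gb) \<bullet> z j) / C)) else 0)"
            by (rule sum.cong) (auto simp: Inl)
          also have "\<dots> = (\<Sum>k\<in>UNIV. (w i0 * lam i0 / C) * (\<alpha> k * ((g k - gb) \<bullet> z j)))"
            by (simp add: field_simps)
          finally show ?thesis .
        qed
        also have "\<dots> = (w i0 * lam i0 / C) * (\<Sum>k\<in>UNIV. \<alpha> k * ((g k - gb) \<bullet> z j))"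
          by (rule sum_distrib_left[symmetric])
        also have "\<dots> = 0" by (simp add: z0)
        finally show ?thesis by (simp add: Inl \<open>c = Inr j\<close> A2)
      next
        case (Inr r')
        show ?thesis
        proof (cases r')
          case (Inl u)
          have "(\<Sum>i\<in>UNIV. \<Sum>k\<in>UNIV. (w i * \<alpha> k * lam i) * (fvec g i k $ r * ((g k - gb) \<bullet> z j) / C))
             = (\<Sum>i\<in>UNIV. \<Sum>k\<in>UNIV. (w i * \<alpha> k * lam i) * (((g k - gb) \<bullet> z j) / C))"
            by (simp add: \<open>r = Inr r'\<close> Inl)
          also have "\<dots> = (\<Sum>i\<in>UNIV. w i * lam i) * (\<Sum>k\<in>UNIV. \<alpha> k * (((g k - gb) \<bullet> z j) / C))"
            by (rule fact_sum)
          also have "\<dots> = 0" using z0[of j] by (simp add: sum_divide_distrib[symmetric])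
          finally show ?thesis by (simp add: \<open>r = Inr r'\<close> Inl \<open>c = Inr j\<close> A4)
        next
          case (Inr b)
          have "(\<Sum>i\<in>UNIV. \<Sum>k\<in>UNIV. (w i * \<alpha> k * lam i) * (fvec g i k $ r * ((g k - gb) \<bullet> z j) / C))
             = (\<Sum>i\<in>UNIV. \<Sum>k\<in>UNIV. (w i * \<alpha> k * lam i) * ((g k $ b * ((g k - gb) \<bullet> z j)) / C))"
            by (simp add: \<open>r = Inr r'\<close> Inr)
          also have "\<dots> = (\<Sum>i\<in>UNIV. w i * lam i) * (\<Sum>k\<in>UNIV. \<alpha> k * ((g k $ b * ((g k - gb) \<bullet> z j)) / C))"
            by (rule fact_sum)
          also have "\<dots> = K $ b $ j" using hz[of b j] hC
            by (simp add: sum_divide_distrib[symmetric])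
          finally show ?thesis by (simp add: \<open>r = Inr r'\<close> Inr \<open>c = Inr j\<close> A5)
        qed
      qed
      finally show ?thesis .
    qed
  qed
qed

lemma Smat_entry:
  "Smat g \<alpha> $ a $ b = (\<Sum>k\<in>UNIV. \<alpha> k * (g k $ a * g k $ b)) - (\<Sum>k\<in>UNIV. \<alpha> k *\<^sub>R g k) $ a * (\<Sum>k\<in>UNIV. \<alpha> k *\<^sub>R g k) $ b"
  unfolding Smat_def outer_def by (simp add: sum_component)

lemma Smat_sym: "transpose (Smat g \<alpha>) = Smat g \<alpha>"
  by (simp add: vec_eq_iff transpose_def Smat_entry mult.commute)

lemma Smat_comp:
  fixes g :: "'k::finite \<Rightarrow> real^'b::finite"
  assumes h\<alpha>: "(\<Sum>k\<in>UNIV. \<alpha> k) = 1" and hgb: "gb = (\<Sum>k\<in>UNIV. \<alpha> k *\<^sub>R g k)"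
  shows "(Smat g \<alpha> *v y) $ b = (\<Sum>k\<in>UNIV. \<alpha> k * (g k $ b * ((g k - gb) \<bullet> y)))"
proof -
  have gbc: "gb $ c = (\<Sum>k\<in>UNIV. \<alpha> k * g k $ c)" for c by (simp add: hgb sum_component)
  have "(Smat g \<alpha> *v y) $ b = (\<Sum>c\<in>UNIV. (\<Sum>k\<in>UNIV. \<alpha> k * (g k $ b * g k $ c)) * y $ c) - gb $ b * (\<Sum>c\<in>UNIV. gb $ c * y $ c)"
    by (simp add: matrix_vector_mult_def Smat_entry hgb[symmetric] left_diff_distrib right_diff_distrib sum_subtractf sum_distrib_left sum_distrib_right mult_ac)
  also have "(\<Sum>c\<in>UNIV. (\<Sum>k\<in>UNIV. \<alpha> k * (g k $ b * g k $ c)) * y $ c) = (\<Sum>k\<in>UNIV. \<alpha> k * (g k $ b * (g k \<bullet> y)))"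
    by (simp add: inner_vec_def sum_distrib_left sum_distrib_right, subst sum.swap, simp add: mult_ac)
  also have "gb $ b * (\<Sum>c\<in>UNIV. gb $ c * y $ c) = (\<Sum>k\<in>UNIV. \<alpha> k * (g k $ b * (gb \<bullet> y)))"
  proof -
    have "gb $ b * (\<Sum>c\<in>UNIV. gb $ c * y $ c) = gb $ b * (gb \<bullet> y)" by (simp add: inner_vec_def)
    also have "\<dots> = (\<Sum>k\<in>UNIV. \<alpha> k * (g k $ b * (gb \<bullet> y)))"
      by (simp only: gbc sum_distrib_right sum_distrib_left mult_ac)
    finally show ?thesis .
  qed
  finally show ?thesis
    by (simp add: inner_diff_left right_diff_distrib sum_subtractf)
qed

lemma Smat_quad:
  fixes g :: "'k::finite \<Rightarrow> real^'b::finite"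
  assumes h\<alpha>: "(\<Sum>k\<in>UNIV. \<alpha> k) = 1" and hgb: "gb = (\<Sum>k\<in>UNIV. \<alpha> k *\<^sub>R g k)"
  shows "y \<bullet> (Smat g \<alpha> *v y) = (\<Sum>k\<in>UNIV. \<alpha> k * ((g k - gb) \<bullet> y)^2)"
proof -
  have z0: "(\<Sum>k\<in>UNIV. \<alpha> k * ((g k - gb) \<bullet> y)) = 0"
  proof -
    have "(\<Sum>k\<in>UNIV. \<alpha> k *\<^sub>R (g k - gb)) = 0"
      by (simp add: scaleR_diff_right sum_subtractf hgb[symmetric] scaleR_sum_left[symmetric] h\<alpha>)
    hence "(\<Sum>k\<in>UNIV. \<alpha> k *\<^sub>R (g k - gb)) \<bullet> y = 0" by simp
    thus ?thesis by (simp add: inner_sum_left)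
  qed
  have "y \<bullet> (Smat g \<alpha> *v y) = (\<Sum>b\<in>UNIV. y $ b * (\<Sum>k\<in>UNIV. \<alpha> k * (g k $ b * ((g k - gb) \<bullet> y))))"
    by (simp add: inner_vec_def Smat_comp[OF assms])
  also have "\<dots> = (\<Sum>k\<in>UNIV. \<alpha> k * ((g k \<bullet> y) * ((g k - gb) \<bullet> y)))"
  proof -
    define d where "d k = (g k - gb) \<bullet> y" for k
    have "(\<Sum>b\<in>UNIV. y $ b * (\<Sum>k\<in>UNIV. \<alpha> k * (g k $ b * d k)))
        = (\<Sum>b\<in>UNIV. \<Sum>k\<in>UNIV. \<alpha> k * d k * (g k $ b * y $ b))"
      by (simp add: sum_distrib_left mult_ac)
    also have "\<dots> = (\<Sum>k\<in>UNIV. \<Sum>b\<in>UNIV. \<alpha> k * d k * (g k $ b * y $ b))"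
      by (rule sum.swap)
    also have "\<dots> = (\<Sum>k\<in>UNIV. \<alpha> k * ((g k \<bullet> y) * d k))"
      by (simp add: sum_distrib_left[symmetric] inner_vec_def mult_ac)
    finally show ?thesis by (simp add: d_def)
  qed
  also have "\<dots> = (\<Sum>k\<in>UNIV. \<alpha> k * ((g k - gb) \<bullet> y)^2) + (gb \<bullet> y) * (\<Sum>k\<in>UNIV. \<alpha> k * ((g k - gb) \<bullet> y))"
    by (simp add: sum_distrib_left sum.distrib[symmetric] power2_eq_square inner_diff_left algebra_simps)
  finally show ?thesis using z0 by simp
qed

lemma Smat_null:
  fixes g :: "'k::finite \<Rightarrow> real^'b::finite"
  assumes h\<alpha>: "(\<Sum>k\<in>UNIV. \<alpha> k) = 1" and hgb: "gb = (\<Sum>k\<in>UNIV. \<alpha> k *\<^sub>R g k)"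
    and hnn: "\<forall>k. 0 \<le> \<alpha> k" and q: "y \<bullet> (Smat g \<alpha> *v y) = 0"
  shows "Smat g \<alpha> *v y = 0"
proof -
  have "(\<Sum>k\<in>UNIV. \<alpha> k * ((g k - gb) \<bullet> y)^2) = 0" using q Smat_quad[OF h\<alpha> hgb] by simp
  hence "\<forall>k\<in>UNIV. \<alpha> k * ((g k - gb) \<bullet> y)^2 = 0"
    by (subst sum_nonneg_eq_0_iff[symmetric]) (auto simp: hnn)
  hence e: "\<alpha> k * ((g k - gb) \<bullet> y) = 0" for k by (auto simp: power2_eq_square)
  show ?thesis
    by (simp add: vec_eq_iff Smat_comp[OF h\<alpha> hgb] mult.left_commute[of "\<alpha> _"] e)
qed

lemma moment_sym: "transpose (moment lam g \<xi>) = moment lam g \<xi>"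
  by (simp add: vec_eq_iff transpose_def moment_def outer_def sum_component mult.commute)

theorem proposition1:
  fixes lam :: "'t::finite \<Rightarrow> real"
    and g :: "'k::finite \<Rightarrow> real^'b::finite"
    and Q1 :: "real^'s1::finite^'t"
    and K :: "real^'s2::finite^'b"
    and w :: "'t \<Rightarrow> real"
    and \<alpha> :: "'k \<Rightarrow> real"
  assumes lam_pos: "\<forall>i. 0 < lam i"
    and Q1_rank: "rank Q1 = CARD('s1)"
    and Q1_contrast: "transpose Q1 *v (1 :: real^'t) = 0"
    and Q1_rows: "\<forall>i. Q1 $ i \<noteq> 0"
    and K_rank: "rank K = CARD('s2)"
    and w_pos: "\<forall>i. 0 < w i"
    and w_sum: "(\<Sum>i\<in>UNIV. w i) = 1"
    and \<alpha>_nonneg: "\<forall>k. 0 \<le> \<alpha> k"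
    and \<alpha>_sum: "(\<Sum>k\<in>UNIV. \<alpha> k) = 1"
    and \<alpha>_feasible: "col_space K \<subseteq> col_space (Smat g \<alpha>)"
  shows "feasible (Amat Q1 K) (moment lam g (prod_design w \<alpha>))
     \<and> (\<forall>G. is_ginv (moment lam g (prod_design w \<alpha>)) G \<longrightarrow>
           invertible (transpose (Amat Q1 K) ** G ** Amat Q1 K)
         \<and> matrix_inv (transpose (Amat Q1 K) ** G ** Amat Q1 K)
           = blockdiag (NQ1 lam Q1 w) ((\<Sum>i\<in>UNIV. lam i * w i) *\<^sub>R NK K g \<alpha>))"
proof -
  define C where "C = (\<Sum>i\<in>UNIV. w i * lam i)"
  have C_pos: "C > 0" unfolding C_def
    by (rule sum_pos) (use lam_pos w_pos in auto)
  define gb where "gb = (\<Sum>k\<in>UNIV. \<alpha> k *\<^sub>R g k)"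
  have ex: "\<forall>j. \<exists>y. Smat g \<alpha> *v y = column j K"
  proof
    fix j
    have "column j K \<in> col_space K"
      unfolding col_space_def by (metis matrix_vector_mult_basis rangeI)
    hence "column j K \<in> col_space (Smat g \<alpha>)" using \<alpha>_feasible by blast
    thus "\<exists>y. Smat g \<alpha> *v y = column j K" unfolding col_space_def by (metis rangeE)
  qed
  then obtain z where z: "\<And>j. Smat g \<alpha> *v z j = column j K" by metis
  define Z :: "real^'s2^'b" where "Z = (\<chi> b j. z j $ b)"
  have SZ: "Smat g \<alpha> ** Z = K"
  proof -
    have "(Smat g \<alpha> ** Z) $ b $ j = K $ b $ j" for b j
    proof -
      have "(Smat g \<alpha> ** Z) $ b $ j = (Smat g \<alpha> *v z j) $ b"
        by (simp add: matrix_matrix_mult_def matrix_vector_mult_def Z_def)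
      also have "\<dots> = K $ b $ j" by (simp add: z column_def)
      finally show ?thesis .
    qed
    thus ?thesis by (simp add: vec_eq_iff)
  qed
  have hz: "(\<Sum>k\<in>UNIV. \<alpha> k * (g k $ b * ((g k - gb) \<bullet> z j))) = K $ b $ j" for j b
    using Smat_comp[OF \<alpha>_sum gb_def, of "z j" b] z[of j] by (simp add: column_def)
  have hQ: "(\<Sum>i\<in>UNIV. Q1 $ i $ j) = 0" for j
  proof -
    have "(transpose Q1 *v (1 :: real^'t)) $ j = 0" using Q1_contrast by simp
    thus ?thesis by (simp add: vector_matrix_mult_def)
  qed
  have hlw: "lam i * w i \<noteq> 0" for i using lam_pos w_pos by (metis mult_pos_pos less_irrefl)
  define X where "X = Xmat lam w Q1 gb z C"
  have MX: "moment lam g (prod_design w \<alpha>) ** X = Amat Q1 K"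
    unfolding X_def
    by (rule moment_X[OF \<alpha>_sum hQ hlw C_def _ gb_def hz]) (use C_pos in simp)
  have feas: "feasible (Amat Q1 K) (moment lam g (prod_design w \<alpha>))"
    unfolding feasible_def using col_space_mul MX by metis
  define Dinv :: "real^'t^'t" where "Dinv = (\<chi> i j. if i = j then 1 / (lam i * w i) else 0)"
  have Dinv: "matrix_inv (M1 lam w) = Dinv"
  proof -
    have e: "\<And>P a b. (if P then a else 0) * (b::real) = (if P then a * b else 0)" by simp
    have "M1 lam w ** Dinv = mat 1"
      using hlw by (simp add: vec_eq_iff M1_def Dinv_def matrix_matrix_mult_def mat_def e)
    thus ?thesis using inv_unique by blast
  qed
  define B1 where "B1 = transpose Q1 ** matrix_inv (M1 lam w) ** Q1"
  define B2 where "B2 = transpose Z ** K"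
  have B2eq: "transpose K ** ginv (Smat g \<alpha>) ** K = B2"
    unfolding B2_def by (rule ginv_form[OF Smat_sym ginv_exists SZ[symmetric]])
  have XA: "transpose X ** Amat Q1 K = blockdiag B1 ((1 / C) *\<^sub>R B2)"
  proof -
    have e: "\<And>P a b. a * (if P then b else 0) = (if P then a * (b::real) else 0)" by simp
    have "(transpose X ** Amat Q1 K) $ c $ c' = blockdiag B1 ((1 / C) *\<^sub>R B2) $ c $ c'" for c c'
      by (cases c; cases c')
         (simp_all add: matrix_matrix_mult_def transpose_def X_def Xmat_def Amat_def blockdiag_def Q2mat_def
          sum_UNIV_sum sum_UNIV_unit B1_def Dinv B2_def Z_def Dinv_def e sum_divide_distrib mult.commute)
    thus ?thesis by (simp add: vec_eq_iff)
  qed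
  have invB1: "invertible B1"
  proof (rule inj_invertible, rule inj_0)
    fix v assume h: "B1 *v v = 0"
    define u where "u = Q1 *v v"
    have "0 = v \<bullet> (B1 *v v)" using h by simp
    also have "\<dots> = u \<bullet> (Dinv *v u)"
      by (simp add: B1_def Dinv u_def matrix_vector_mul_assoc[symmetric] dot_transpose del: transpose_matrix_vector)
    also have "\<dots> = (\<Sum>i\<in>UNIV. (u $ i)^2 / (lam i * w i))"
    proof -
      have e: "\<And>P a b. a * (if P then b else 0) = (if P then a * (b::real) else 0)" by simp
      have e2: "\<And>P a b. (if P then a else 0) * (b::real) = (if P then a * b else 0)" by simp
      show ?thesis by (simp add: inner_vec_def matrix_vector_mult_def Dinv_def e e2 power2_eq_square)
    qed
    finally have s0: "(\<Sum>i\<in>UNIV. (u $ i)^2 / (lam i * w i)) = 0" by simp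
    have "\<forall>i\<in>UNIV. (u $ i)^2 / (lam i * w i) = 0"
      by (subst sum_nonneg_eq_0_iff[symmetric]) (use s0 lam_pos w_pos in \<open>auto intro!: divide_nonneg_pos\<close>)
    hence "u = 0" using hlw by (simp add: vec_eq_iff)
    hence "Q1 *v v = Q1 *v 0" by (simp add: u_def)
    thus "v = 0" using Q1_rank full_rank_injective injD by metis
  qed
  have invB2: "invertible B2"
  proof (rule inj_invertible, rule inj_0)
    fix v assume h: "B2 *v v = 0"
    define y where "y = Z *v v"
    have "0 = v \<bullet> (B2 *v v)" using h by simp
    also have "\<dots> = y \<bullet> (Smat g \<alpha> *v y)"
      by (simp add: B2_def SZ[symmetric] y_def matrix_vector_mul_assoc[symmetric] dot_transpose del: transpose_matrix_vector)
    finally have "Smat g \<alpha> *v y = 0"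
      by (intro Smat_null[OF \<alpha>_sum gb_def \<alpha>_nonneg]) simp
    hence "K *v v = K *v 0" by (simp add: SZ[symmetric] y_def matrix_vector_mul_assoc[symmetric])
    thus "v = 0" using K_rank full_rank_injective injD by metis
  qed
  have invB2': "invertible ((1 / C) *\<^sub>R B2)"
    using invB2 C_pos by (intro scalar_invertible) auto
  have invs: "matrix_inv ((1 / C) *\<^sub>R B2) = C *\<^sub>R matrix_inv B2"
  proof -
    have "((1 / C) *\<^sub>R B2) ** (C *\<^sub>R matrix_inv B2) = mat 1"
      using C_pos inv_right[OF invB2]
      by (simp add: matrix_scalar_ac scalar_matrix_assoc[symmetric])
    thus ?thesis using inv_unique by blast
  qed
  have "\<forall>G. is_ginv (moment lam g (prod_design w \<alpha>)) G \<longrightarrow>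
           invertible (transpose (Amat Q1 K) ** G ** Amat Q1 K)
         \<and> matrix_inv (transpose (Amat Q1 K) ** G ** Amat Q1 K)
           = blockdiag (NQ1 lam Q1 w) ((\<Sum>i\<in>UNIV. lam i * w i) *\<^sub>R NK K g \<alpha>)"
  proof (intro allI impI)
    fix G assume G: "is_ginv (moment lam g (prod_design w \<alpha>)) G"
    have e: "transpose (Amat Q1 K) ** G ** Amat Q1 K = blockdiag B1 ((1 / C) *\<^sub>R B2)"
      using ginv_form[OF moment_sym G MX[symmetric]] XA by simp
    have C': "(\<Sum>i\<in>UNIV. lam i * w i) = C" by (simp add: C_def mult.commute)
    show "invertible (transpose (Amat Q1 K) ** G ** Amat Q1 K)
         \<and> matrix_inv (transpose (Amat Q1 K) ** G ** Amat Q1 K)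
           = blockdiag (NQ1 lam Q1 w) ((\<Sum>i\<in>UNIV. lam i * w i) *\<^sub>R NK K g \<alpha>)"
      unfolding e using blockdiag_inv[OF invB1 invB2']
      by (simp add: invs C' NQ1_def B1_def NK_def info_def B2eq)
  qed
  with feas show ?thesis by blast
qed

end
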